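(* Let $L(\mathbf{w})=\frac1n\sum_{k=1}^Kn_kL_k(\mathbf{w})$ be the global loss over $K$ devices with $n_k\ge1$ samples, $n=\sum_kn_k$, with $\mathbf{w}^*$ its optimal model. Assume (i) $\nabla L$ is Lipschitz continuous with modulus $\ell>0$, and (ii) $L$ is $\mu$-strongly convex with $\mu>0$: $L(\mathbf{u})\ge L(\mathbf{v})+\nabla L(\mathbf{v})^\top(\mathbf{u}-\mathbf{v})+\frac\mu2\|\mathbf{u}-\mathbf{v}\|^2$ for all $\mathbf{u},\mathbf{v}$. Starting from $\mathbf{w}^1$, in each round $i=1,2,\dots$ let $\mathbf{g}_k^i=\nabla L_k(\mathbf{w}^i)$ (assumed nonzero), draw a device $X^i$ with probabilities $$p_k^{i*}=\frac{n_k}{n}\|\mathbf{g}_k^i\|\sqrt{\frac{\rho}{(1-\rho)T_k^{\mathrm{U},i}+\lambda^{i*}}},$$ where $\rho\in(0,1]$, $T_k^{\mathrm{U},i}=\frac{qS}{B\log_2(1+\gamma_k^i)}$ and $\lambda^{i*}$ is chosen so that $\sum_kp_k^{i*}=1$, and update $\mathbf{w}^{i+1}=\mathbf{w}^i-\eta^i\frac{n_{X^i}}{np^{i*}_{X^i}}\mathbf{g}^i_{X^i}$ with learning rates $0<\eta^i<\frac1{2\mu}$. Then for every $t\ge1$, $$\mathbb{E}\{L(\mathbf{w}^{t+1})-L(\mathbf{w}^* )\}\le\prod_{i=1}^t(1-2\mu\eta^i)\,\mathbb{E}\{L(\mathbf{w}^1)-L(\mathbf{w}^* )\}+\frac{\ell}{2n}\sum_{i=1}^tA^i(\eta^i)^2\sum_{k=1}^Kn_k\|\mathbf{g}_k^i\|\sqrt{\frac{(1-\rho)T_k^{\mathrm{U},i}+\lambda^{i*}}{\rho}},$$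 where $A^i=\prod_{j=i+1}^t(1-2\mu\eta^j)$.
   Context: $S$ is the number of model parameters, $q$ the number of bits per gradient element, $B$ the system bandwidth, $\gamma_k^i>0$ the uplink SNR of device $k$ in round $i$; $T_k^{\mathrm{U},i}$ is device $k$'s gradient upload latency. The probabilities $p_k^{i*}$ are the importance- and channel-aware scheduling policy minimizing, over distributions $(p_k)$, $\sum_k p_k\big(\rho\|\frac{n_k}{np_k}\mathbf{g}_k^i-\nabla L(\mathbf{w}^i)\|^2+(1-\rho)T_k^i\big)$, with $T_k^i$ the one-round latency when device $k$ is scheduled. *)

theory Defs
  imports "HOL-Probability.Probability"
begin

text \<open>Devices are indexed by k < K; nk k is the number of samples of device k.\<close>

definition total_samples :: "(nat \<Rightarrow> nat) \<Rightarrow> nat \<Rightarrow> real" where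
  "total_samples nk K = (\<Sum>k<K. real (nk k))"

definition global_loss :: "(nat \<Rightarrow> nat) \<Rightarrow> nat \<Rightarrow> (nat \<Rightarrow> 'v \<Rightarrow> real) \<Rightarrow> 'v \<Rightarrow> real" where
  "global_loss nk K Lk w = (\<Sum>k<K. real (nk k) * Lk k w) / total_samples nk K"

text \<open>Global gradient (1/n) sum_k n_k grad L_k(w), with G k w = grad L_k(w)\<close>
definition global_grad :: "(nat \<Rightarrow> nat) \<Rightarrow> nat \<Rightarrow> (nat \<Rightarrow> 'v \<Rightarrow> 'v) \<Rightarrow> 'v \<Rightarrow> 'v::real_vector" where
  "global_grad nk K G w = (1 / total_samples nk K) *\<^sub>R (\<Sum>k<K. real (nk k) *\<^sub>R G k w)"

definition upload_lat :: "real \<Rightarrow> real \<Rightarrow> real \<Rightarrow> real \<Rightarrow> real" where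
  "upload_lat q S B snr = q * S / (B * log 2 (1 + snr))"

text \<open>Scheduling probability p_k^{i*} for device k at model w, given the
  latencies Tk (of round i) and the multiplier lam (= lambda^{i*}).\<close>
definition sched_prob :: "(nat \<Rightarrow> nat) \<Rightarrow> nat \<Rightarrow> (nat \<Rightarrow> 'v \<Rightarrow> 'v::real_normed_vector)
    \<Rightarrow> real \<Rightarrow> (nat \<Rightarrow> real) \<Rightarrow> real \<Rightarrow> 'v \<Rightarrow> nat \<Rightarrow> real" where
  "sched_prob nk K G \<rho> Tk lam w k =
     real (nk k) / total_samples nk K * norm (G k w) * sqrt (\<rho> / ((1 - \<rho>) * Tk k + lam))"

definition sgd_step :: "(nat \<Rightarrow> nat) \<Rightarrow> nat \<Rightarrow> (nat \<Rightarrow> 'v \<Rightarrow> 'v::real_normed_vector)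
    \<Rightarrow> real \<Rightarrow> (nat \<Rightarrow> nat \<Rightarrow> real) \<Rightarrow> (nat \<Rightarrow> 'v \<Rightarrow> real) \<Rightarrow> (nat \<Rightarrow> real)
    \<Rightarrow> nat \<Rightarrow> 'v \<Rightarrow> 'v pmf" where
  "sgd_step nk K G \<rho> T lam \<eta> i w =
     (let p = sched_prob nk K G \<rho> (T i) (lam i w) w in
      map_pmf (\<lambda>X. w - (\<eta> i * real (nk X) / (total_samples nk K * p X)) *\<^sub>R G X w)
              (embed_pmf (\<lambda>X. if X < K then p X else 0)))"

text \<open>wdist ... i is the distribution of the model w^i (i \<ge> 1); w^1 = w1.\<close>
fun wdist :: "(nat \<Rightarrow> nat) \<Rightarrow> nat \<Rightarrow> (nat \<Rightarrow> 'v \<Rightarrow> 'v::real_normed_vector)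
    \<Rightarrow> real \<Rightarrow> (nat \<Rightarrow> nat \<Rightarrow> real) \<Rightarrow> (nat \<Rightarrow> 'v \<Rightarrow> real) \<Rightarrow> (nat \<Rightarrow> real)
    \<Rightarrow> 'v \<Rightarrow> nat \<Rightarrow> 'v pmf" where
  "wdist nk K G \<rho> T lam \<eta> w1 0 = return_pmf w1"
| "wdist nk K G \<rho> T lam \<eta> w1 (Suc i) =
     (if i = 0 then return_pmf w1
      else bind_pmf (wdist nk K G \<rho> T lam \<eta> w1 i) (sgd_step nk K G \<rho> T lam \<eta> i))"

end

theory Submission
  imports Defs
begin

lemma descent:
  fixes L :: "'v::real_inner \<Rightarrow> real" and gradL :: "'v \<Rightarrow> 'v"
  assumes der: "\<forall>w. (L has_derivative (\<lambda>h. gradL w \<bullet> h)) (at w)"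
    and lip: "\<forall>u v. norm (gradL u - gradL v) \<le> ell * norm (u - v)"
  shows "L u \<le> L v + gradL v \<bullet> (u - v) + ell / 2 * (norm (u - v))\<^sup>2"
proof -
  define d where "d = u - v"
  define \<phi> where "\<phi> s = L (v + s *\<^sub>R d) - s * (gradL v \<bullet> d) - ell / 2 * s\<^sup>2 * (norm d)\<^sup>2" for s :: real
  define \<phi>' where "\<phi>' s = gradL (v + s *\<^sub>R d) \<bullet> d - gradL v \<bullet> d - ell * s * (norm d)\<^sup>2" for s :: real
  have D: "(\<phi> has_real_derivative \<phi>' s) (at s)" for s
  proof -
    have l: "((\<lambda>s. v + s *\<^sub>R d) has_derivative (\<lambda>h. h *\<^sub>R d)) (at s)"
      by (auto intro!: derivative_eq_intros)
    have "((\<lambda>s. L (v + s *\<^sub>R d)) has_derivative (\<lambda>h. gradL (v + s *\<^sub>R d) \<bullet> (h *\<^sub>R d))) (at s)"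
      using has_derivative_compose[OF l der[rule_format, of "v + s *\<^sub>R d"]] by simp
    hence "((\<lambda>s. L (v + s *\<^sub>R d)) has_real_derivative (gradL (v + s *\<^sub>R d) \<bullet> d)) (at s)"
      unfolding has_field_derivative_def
      by (rule has_derivative_eq_rhs) (auto simp: fun_eq_iff)
    then show ?thesis unfolding \<phi>_def \<phi>'_def
      by (auto intro!: derivative_eq_intros)
  qed
  obtain z where z: "0 < z" "z < 1" "\<phi> 1 - \<phi> 0 = (1 - 0) * \<phi>' z"
    using MVT2[of 0 1 \<phi> \<phi>'] D by auto
  have "\<phi>' z \<le> 0"
  proof -
    have "(gradL (v + z *\<^sub>R d) - gradL v) \<bullet> d \<le> norm (gradL (v + z *\<^sub>R d) - gradL v) * norm d"
      by (rule norm_cauchy_schwarz)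
    also have "\<dots> \<le> ell * norm (z *\<^sub>R d) * norm d"
      using lip[rule_format, of "v + z *\<^sub>R d" v] by (intro mult_right_mono) auto
    also have "\<dots> = ell * z * (norm d)\<^sup>2" using z by (simp add: power2_eq_square)
    finally show ?thesis unfolding \<phi>'_def by (simp add: inner_diff_left)
  qed
  then have "\<phi> 1 \<le> \<phi> 0" using z by simp
  then show ?thesis unfolding \<phi>_def d_def by simp
qed

lemma pl:
  fixes L :: "'v::real_inner \<Rightarrow> real" and gradL :: "'v \<Rightarrow> 'v"
  assumes sc: "\<forall>u v. L u \<ge> L v + gradL v \<bullet> (u - v) + \<mu> / 2 * (norm (u - v))\<^sup>2"
    and mu: "\<mu> > 0"
  shows "2 * \<mu> * (L w - L wstar) \<le> (norm (gradL w))\<^sup>2"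
proof -
  define g where "g = gradL w"
  define d where "d = wstar - w"
  have 1: "L wstar \<ge> L w + g \<bullet> d + \<mu> / 2 * (norm d)\<^sup>2"
    using sc unfolding g_def d_def by blast
  have "0 \<le> (norm (\<mu> *\<^sub>R d + g))\<^sup>2" by simp
  also have "\<dots> = \<mu>\<^sup>2 * (norm d)\<^sup>2 + 2 * \<mu> * (g \<bullet> d) + (norm g)\<^sup>2"
    by (simp only: power2_norm_eq_inner) (simp add: inner_add_left inner_add_right inner_commute power2_eq_square algebra_simps)
  finally have 2: "0 \<le> \<mu>\<^sup>2 * (norm d)\<^sup>2 + 2 * \<mu> * (g \<bullet> d) + (norm g)\<^sup>2" .
  have "2 * \<mu> * (L w - L wstar) \<le> 2 * \<mu> * (- (g \<bullet> d) - \<mu> / 2 * (norm d)\<^sup>2)"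
    using 1 mu by (intro mult_left_mono) auto
  also have "\<dots> \<le> (norm g)\<^sup>2" using 2 by (simp add: power2_eq_square algebra_simps)
  finally show ?thesis unfolding g_def .
qed
lemma step_bound:
  fixes L :: "'v::real_inner \<Rightarrow> real" and gradL :: "'v \<Rightarrow> 'v" and g :: "nat \<Rightarrow> 'v"
  assumes desc: "\<forall>u v. L u \<le> L v + gradL v \<bullet> (u - v) + ell / 2 * (norm (u - v))\<^sup>2"
    and plw: "2 * \<mu> * (L w - Ls) \<le> (norm (gradL w))\<^sup>2"
    and gw: "gradL w = (1 / n) *\<^sub>R (\<Sum>k<K. real (nk k) *\<^sub>R g k)"
    and ppos: "\<forall>k<K. p k > 0" and psum: "(\<Sum>k<K. p k) = 1"
    and npos: "n > 0" and eta: "\<eta> \<ge> 0"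
  shows "(\<Sum>k<K. p k * (L (w - (\<eta> * real (nk k) / (n * p k)) *\<^sub>R g k) - Ls))
     \<le> (1 - 2 * \<mu> * \<eta>) * (L w - Ls)
        + ell / 2 * \<eta>\<^sup>2 * (\<Sum>k<K. (real (nk k))\<^sup>2 / (n\<^sup>2 * p k) * (norm (g k))\<^sup>2)"
proof -
  define a where "a k = \<eta> * real (nk k) / (n * p k)" for k
  have each: "p k * (L (w - a k *\<^sub>R g k) - Ls) \<le>
      p k * (L w - Ls) - \<eta> * (real (nk k) / n) * (gradL w \<bullet> g k)
      + ell / 2 * \<eta>\<^sup>2 * ((real (nk k))\<^sup>2 / (n\<^sup>2 * p k) * (norm (g k))\<^sup>2)" if k: "k < K" for k
  proof -
    have pk: "p k > 0" using ppos k by auto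
    have "L (w - a k *\<^sub>R g k) \<le> L w + gradL w \<bullet> (- (a k *\<^sub>R g k)) + ell / 2 * (norm (a k *\<^sub>R g k))\<^sup>2"
      using desc[rule_format, of "w - a k *\<^sub>R g k" w] by simp
    then have "p k * (L (w - a k *\<^sub>R g k) - Ls) \<le> p k * (L w + gradL w \<bullet> (- (a k *\<^sub>R g k)) + ell / 2 * (norm (a k *\<^sub>R g k))\<^sup>2 - Ls)"
      using pk by (intro mult_left_mono) auto
    also have "\<dots> = p k * (L w - Ls) - \<eta> * (real (nk k) / n) * (gradL w \<bullet> g k)
      + ell / 2 * \<eta>\<^sup>2 * ((real (nk k))\<^sup>2 / (n\<^sup>2 * p k) * (norm (g k))\<^sup>2)"
      using pk npos unfolding a_def
      by (simp add: power_mult_distrib power_divide field_simps power2_eq_square)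
    finally show ?thesis .
  qed
  have "(\<Sum>k<K. p k * (L (w - a k *\<^sub>R g k) - Ls)) \<le> (\<Sum>k<K. p k * (L w - Ls) - \<eta> * (real (nk k) / n) * (gradL w \<bullet> g k)
      + ell / 2 * \<eta>\<^sup>2 * ((real (nk k))\<^sup>2 / (n\<^sup>2 * p k) * (norm (g k))\<^sup>2))"
    by (intro sum_mono each) auto
  also have "\<dots> = (L w - Ls) - \<eta> * (gradL w \<bullet> gradL w)
      + ell / 2 * \<eta>\<^sup>2 * (\<Sum>k<K. (real (nk k))\<^sup>2 / (n\<^sup>2 * p k) * (norm (g k))\<^sup>2)"
  proof -
    have "(\<Sum>k<K. \<eta> * (real (nk k) / n) * (gradL w \<bullet> g k)) = \<eta> * (gradL w \<bullet> gradL w)"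
      by (subst (2) gw) (simp add: inner_sum_right sum_distrib_left algebra_simps)
    moreover have "(\<Sum>k<K. p k * (L w - Ls)) = L w - Ls"
      using psum by (simp add: sum_distrib_right[symmetric])
    ultimately show ?thesis
      by (simp add: sum.distrib sum_subtractf sum_distrib_left)
  qed
  also have "\<dots> \<le> (1 - 2 * \<mu> * \<eta>) * (L w - Ls)
        + ell / 2 * \<eta>\<^sup>2 * (\<Sum>k<K. (real (nk k))\<^sup>2 / (n\<^sup>2 * p k) * (norm (g k))\<^sup>2)"
  proof -
    have "\<eta> * (2 * \<mu> * (L w - Ls)) \<le> \<eta> * (gradL w \<bullet> gradL w)"
      using plw eta by (intro mult_left_mono) (auto simp: power2_norm_eq_inner)
    then show ?thesis by (simp add: algebra_simps)
  qed
  finally show ?thesis unfolding a_def .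
qed

lemma embed_exp:
  fixes P :: "nat \<Rightarrow> real" and F :: "nat \<Rightarrow> 'a" and h :: "'a \<Rightarrow> real"
  assumes ppos: "\<forall>k<K. P k > 0" and psum: "(\<Sum>k<K. P k) = 1"
  shows "measure_pmf.expectation (map_pmf F (embed_pmf (\<lambda>X. if X < K then P X else 0))) h
          = (\<Sum>k<K. P k * h (F k))"
    and "finite (set_pmf (map_pmf F (embed_pmf (\<lambda>X. if X < K then P X else 0))))"
proof -
  define Q where "Q X = (if X < K then P X else 0)" for X
  have nn: "\<And>x. 0 \<le> Q x" using ppos unfolding Q_def by (auto intro: less_imp_le)
  have "(\<integral>\<^sup>+x. ennreal (Q x) \<partial>count_space UNIV) = (\<Sum>x<K. ennreal (Q x))"
    by (rule nn_integral_count_space') (auto simp: Q_def)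
  also have "\<dots> = ennreal (\<Sum>x<K. Q x)" using nn by (simp add: sum_ennreal)
  also have "\<dots> = 1" using psum unfolding Q_def by simp
  finally have tot: "(\<integral>\<^sup>+x. ennreal (Q x) \<partial>count_space UNIV) = 1" .
  have pm: "pmf (embed_pmf Q) x = Q x" for x using pmf_embed_pmf[OF nn tot] .
  have sp: "set_pmf (embed_pmf Q) \<subseteq> {..<K}"
    using pm by (auto simp: set_pmf_eq Q_def split: if_splits)
  have "measure_pmf.expectation (map_pmf F (embed_pmf Q)) h = measure_pmf.expectation (embed_pmf Q) (\<lambda>x. h (F x))"
    by simp
  also have "\<dots> = (\<Sum>k<K. pmf (embed_pmf Q) k *\<^sub>R h (F k))"
    using sp by (intro integral_measure_pmf) auto
  also have "\<dots> = (\<Sum>k<K. P k * h (F k))" using pm by (simp add: Q_def)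
  finally show "measure_pmf.expectation (map_pmf F (embed_pmf (\<lambda>X. if X < K then P X else 0))) h
          = (\<Sum>k<K. P k * h (F k))" unfolding Q_def .
  show "finite (set_pmf (map_pmf F (embed_pmf (\<lambda>X. if X < K then P X else 0))))"
    using sp finite_subset unfolding Q_def by auto
qed
theorem theorem2:
  fixes K :: nat and nk :: "nat \<Rightarrow> nat"
    and Lk :: "nat \<Rightarrow> 'v::euclidean_space \<Rightarrow> real" and G :: "nat \<Rightarrow> 'v \<Rightarrow> 'v"
    and wstar w1 :: 'v and ell \<mu> \<rho> q S B :: real
    and snr :: "nat \<Rightarrow> nat \<Rightarrow> real" and lam :: "nat \<Rightarrow> 'v \<Rightarrow> real"
    and \<eta> :: "nat \<Rightarrow> real" and t :: nat
  defines "L \<equiv> global_loss nk K Lk"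
    and "gradL \<equiv> global_grad nk K G"
    and "n \<equiv> total_samples nk K"
    and "T \<equiv> (\<lambda>i k. upload_lat q S B (snr i k))"
  assumes K_pos: "K \<ge> 1"
    and nk_pos: "\<forall>k<K. nk k \<ge> 1"
    and grad: "\<forall>k<K. \<forall>w. (Lk k has_derivative (\<lambda>h. G k w \<bullet> h)) (at w)"
    and lipschitz: "ell > 0" "\<forall>u v. norm (gradL u - gradL v) \<le> ell * norm (u - v)"
    and strongly_convex: "\<mu> > 0"
      "\<forall>u v. L u \<ge> L v + gradL v \<bullet> (u - v) + \<mu> / 2 * (norm (u - v))\<^sup>2"
    and optimal: "\<forall>w. L wstar \<le> L w"
    and rho: "0 < \<rho>" "\<rho> \<le> 1"
    and params: "q > 0" "S > 0" "B > 0" "\<forall>i k. snr i k > 0"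
    and lam_choice: "\<forall>i\<ge>1. \<forall>w. (\<forall>k<K. G k w \<noteq> 0) \<longrightarrow>
        (\<forall>k<K. (1 - \<rho>) * T i k + lam i w > 0) \<and>
        (\<Sum>k<K. sched_prob nk K G \<rho> (T i) (lam i w) w k) = 1"
    and grad_nonzero: "\<forall>i\<ge>1. \<forall>w\<in>set_pmf (wdist nk K G \<rho> T lam \<eta> w1 i). \<forall>k<K. G k w \<noteq> 0"
    and eta: "\<forall>i\<ge>1. 0 < \<eta> i \<and> \<eta> i < 1 / (2 * \<mu>)"
    and t_pos: "t \<ge> 1"
  shows "measure_pmf.expectation (wdist nk K G \<rho> T lam \<eta> w1 (t + 1)) (\<lambda>w. L w - L wstar)
    \<le> (\<Prod>i=1..t. 1 - 2 * \<mu> * \<eta> i) *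
        measure_pmf.expectation (wdist nk K G \<rho> T lam \<eta> w1 1) (\<lambda>w. L w - L wstar)
      + ell / (2 * n) * (\<Sum>i=1..t. (\<Prod>j=i+1..t. 1 - 2 * \<mu> * \<eta> j) * (\<eta> i)\<^sup>2 *
          measure_pmf.expectation (wdist nk K G \<rho> T lam \<eta> w1 i)
            (\<lambda>w. \<Sum>k<K. real (nk k) * norm (G k w) * sqrt (((1 - \<rho>) * T i k + lam i w) / \<rho>)))"
proof -
  have npos: "n > 0" unfolding n_def total_samples_def
    using K_pos nk_pos by (intro sum_pos) (auto simp: lessThan_empty_iff)
  have der: "\<forall>w. (L has_derivative (\<lambda>h. gradL w \<bullet> h)) (at w)"
  proof
    fix w
    have d1: "((\<lambda>w. \<Sum>k<K. real (nk k) * Lk k w) has_derivative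
        (\<lambda>h. \<Sum>k<K. real (nk k) * (G k w \<bullet> h))) (at w)"
      using grad by (intro has_derivative_sum has_derivative_mult_right) auto
    have "((\<lambda>w. inverse n * (\<Sum>k<K. real (nk k) * Lk k w)) has_derivative
        (\<lambda>h. inverse n * (\<Sum>k<K. real (nk k) * (G k w \<bullet> h)))) (at w)"
      by (rule has_derivative_mult_right[OF d1])
    moreover have "(\<lambda>h. inverse n * (\<Sum>k<K. real (nk k) * (G k w \<bullet> h))) = (\<lambda>h. gradL w \<bullet> h)"
      unfolding gradL_def global_grad_def n_def
      by (auto simp: fun_eq_iff inner_sum_left divide_inverse mult.commute)
    moreover have "L = (\<lambda>w. inverse n * (\<Sum>k<K. real (nk k) * Lk k w))"
      unfolding L_def global_loss_def n_def by (auto simp: fun_eq_iff divide_inverse mult.commute)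
    ultimately show "(L has_derivative (\<lambda>h. gradL w \<bullet> h)) (at w)"
      by simp
  qed
  have desc: "\<forall>u v. L u \<le> L v + gradL v \<bullet> (u - v) + ell / 2 * (norm (u - v))\<^sup>2"
    using descent[OF der lipschitz(2)] by blast
  have plw: "2 * \<mu> * (L w - L wstar) \<le> (norm (gradL w))\<^sup>2" for w
    using pl[OF strongly_convex(2) strongly_convex(1)] .
  define C where "C i w = (\<Sum>k<K. real (nk k) * norm (G k w) * sqrt (((1 - \<rho>) * T i k + lam i w) / \<rho>))" for i w
  define W where "W i = wdist nk K G \<rho> T lam \<eta> w1 i" for i
  define f where "f w = L w - L wstar" for w
  have step: "measure_pmf.expectation (sgd_step nk K G \<rho> T lam \<eta> i w) f
      \<le> (1 - 2 * \<mu> * \<eta> i) * f w + ell / (2 * n) * (\<eta> i)\<^sup>2 * C i w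
     \<and> finite (set_pmf (sgd_step nk K G \<rho> T lam \<eta> i w))"
    if i: "i \<ge> 1" and gnz: "\<forall>k<K. G k w \<noteq> 0" for i w
  proof -
    define p where "p = sched_prob nk K G \<rho> (T i) (lam i w) w"
    define D where "D k = (1 - \<rho>) * T i k + lam i w" for k
    have Dpos: "\<forall>k<K. D k > 0" and psum: "(\<Sum>k<K. p k) = 1"
      using lam_choice i gnz unfolding p_def D_def by auto
    have pk: "p k = real (nk k) / n * norm (G k w) * sqrt (\<rho> / D k)" for k
      unfolding p_def sched_prob_def D_def n_def by simp
    have ppos: "\<forall>k<K. p k > 0"
    proof (intro allI impI)
      fix k assume k: "k < K"
      have "real (nk k) / n > 0" using nk_pos k npos by auto
      moreover have "norm (G k w) > 0" using gnz k by auto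
      moreover have "sqrt (\<rho> / D k) > 0" using Dpos k rho by auto
      ultimately show "p k > 0" unfolding pk by (intro mult_pos_pos)
    qed
    have ex: "measure_pmf.expectation (sgd_step nk K G \<rho> T lam \<eta> i w) f
        = (\<Sum>k<K. p k * f (w - (\<eta> i * real (nk k) / (n * p k)) *\<^sub>R G k w))"
      and fin: "finite (set_pmf (sgd_step nk K G \<rho> T lam \<eta> i w))"
      using embed_exp[OF ppos psum] unfolding sgd_step_def Let_def p_def n_def by auto
    have gw: "gradL w = (1 / n) *\<^sub>R (\<Sum>k<K. real (nk k) *\<^sub>R G k w)"
      unfolding gradL_def global_grad_def n_def ..
    have sb: "(\<Sum>k<K. p k * f (w - (\<eta> i * real (nk k) / (n * p k)) *\<^sub>R G k w))
     \<le> (1 - 2 * \<mu> * \<eta> i) * f w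
        + ell / 2 * (\<eta> i)\<^sup>2 * (\<Sum>k<K. (real (nk k))\<^sup>2 / (n\<^sup>2 * p k) * (norm (G k w))\<^sup>2)"
      unfolding f_def using step_bound[OF desc plw gw ppos psum npos] eta i by auto
    have "(\<Sum>k<K. (real (nk k))\<^sup>2 / (n\<^sup>2 * p k) * (norm (G k w))\<^sup>2) = C i w / n"
      unfolding C_def sum_divide_distrib
    proof (intro sum.cong refl)
      fix k assume k: "k \<in> {..<K}"
      have Dk: "D k > 0" using Dpos k by auto
      have nk0: "real (nk k) > 0" using nk_pos k by auto
      have g0: "norm (G k w) > 0" using gnz k by auto
      have sq: "sqrt (\<rho> / D k) * sqrt (D k / \<rho>) = 1"
        using Dk rho by (simp add: real_sqrt_mult[symmetric])
      have s0: "sqrt (\<rho> / D k) > 0" using Dk rho by simp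
      have s': "sqrt (D k / \<rho>) = 1 / sqrt (\<rho> / D k)"
        using sq s0 by (simp add: eq_divide_eq mult.commute)
      have "(real (nk k))\<^sup>2 / (n\<^sup>2 * p k) * (norm (G k w))\<^sup>2
          = real (nk k) * norm (G k w) * sqrt (D k / \<rho>) / n"
        using npos nk0 g0 s0 unfolding pk s' by (simp add: field_simps power2_eq_square)
      then show "(real (nk k))\<^sup>2 / (n\<^sup>2 * p k) * (norm (G k w))\<^sup>2
          = real (nk k) * norm (G k w) * sqrt (((1 - \<rho>) * T i k + lam i w) / \<rho>) / n"
        unfolding D_def .
    qed
    then show ?thesis using ex sb fin by (simp add: field_simps)
  qed
  have finW: "finite (set_pmf (W i))" for i
  proof (induction i)
    case 0 then show ?case unfolding W_def by simp
  next
    case (Suc i)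
    show ?case
    proof (cases "i = 0")
      case True then show ?thesis unfolding W_def by simp
    next
      case False
      have "\<forall>w\<in>set_pmf (W i). \<forall>k<K. G k w \<noteq> 0" using grad_nonzero[rule_format, of i] False unfolding W_def by auto
      then show ?thesis using Suc False step unfolding W_def by auto
    qed
  qed
  have Eeq: "measure_pmf.expectation (W i) h = (\<Sum>a\<in>set_pmf (W i). pmf (W i) a * h a)" for i and h :: "'v \<Rightarrow> real"
    using finW[of i] by (subst integral_measure_pmf[of "set_pmf (W i)"]) auto
  define c where "c i = 1 - 2 * \<mu> * \<eta> i" for i
  have c0: "c i \<ge> 0" if "i \<ge> 1" for i
    using eta that strongly_convex(1) unfolding c_def by (auto simp: field_simps)
  have main: "measure_pmf.expectation (W (t + 1)) f
    \<le> (\<Prod>i=1..t. c i) * measure_pmf.expectation (W 1) f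
      + ell / (2 * n) * (\<Sum>i=1..t. (\<Prod>j=i+1..t. c j) * (\<eta> i)\<^sup>2 * measure_pmf.expectation (W i) (C i))" for t
  proof (induction t)
    case 0 then show ?case by simp
  next
    case (Suc t)
    let ?E = "\<lambda>i h. measure_pmf.expectation (W i) h"
    have s1: "Suc t \<ge> 1" by simp
    have gnz: "\<forall>w\<in>set_pmf (W (Suc t)). \<forall>k<K. G k w \<noteq> 0" using grad_nonzero s1 unfolding W_def by blast
    have WS: "W (Suc t + 1) = bind_pmf (W (Suc t)) (sgd_step nk K G \<rho> T lam \<eta> (Suc t))"
      unfolding W_def by simp
    have "?E (Suc t + 1) f = (\<Sum>a\<in>set_pmf (W (Suc t)). pmf (W (Suc t)) a *\<^sub>R
          measure_pmf.expectation (sgd_step nk K G \<rho> T lam \<eta> (Suc t) a) f)"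
      unfolding WS using finW gnz step by (intro pmf_expectation_bind) auto
    also have "\<dots> \<le> (\<Sum>a\<in>set_pmf (W (Suc t)). pmf (W (Suc t)) a *
          (c (Suc t) * f a + ell / (2 * n) * (\<eta> (Suc t))\<^sup>2 * C (Suc t) a))"
      using gnz step unfolding c_def by (auto intro!: sum_mono mult_left_mono)
    also have "\<dots> = c (Suc t) * ?E (Suc t) f + ell / (2 * n) * (\<eta> (Suc t))\<^sup>2 * ?E (Suc t) (C (Suc t))"
      unfolding Eeq by (simp add: sum.distrib sum_distrib_left algebra_simps)
    also have "\<dots> \<le> c (Suc t) * ((\<Prod>i=1..t. c i) * ?E 1 f
      + ell / (2 * n) * (\<Sum>i=1..t. (\<Prod>j=i+1..t. c j) * (\<eta> i)\<^sup>2 * ?E i (C i)))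
      + ell / (2 * n) * (\<eta> (Suc t))\<^sup>2 * ?E (Suc t) (C (Suc t))"
      using Suc.IH c0[of "Suc t"] by (simp add: mult_left_mono)
    also have "\<dots> = (\<Prod>i=1..Suc t. c i) * ?E 1 f
      + ell / (2 * n) * (\<Sum>i=1..Suc t. (\<Prod>j=i+1..Suc t. c j) * (\<eta> i)\<^sup>2 * ?E i (C i))"
    proof -
      have "(\<Prod>j=i+1..Suc t. c j) = c (Suc t) * (\<Prod>j=i+1..t. c j)" if "i \<le> t" for i
        using that by (simp add: prod.cl_ivl_Suc)
      then have "(\<Sum>i=1..t. (\<Prod>j=i+1..Suc t. c j) * (\<eta> i)\<^sup>2 * ?E i (C i))
          = c (Suc t) * (\<Sum>i=1..t. (\<Prod>j=i+1..t. c j) * (\<eta> i)\<^sup>2 * ?E i (C i))"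
        by (simp add: sum_distrib_left mult.assoc mult.left_commute)
      then show ?thesis by (simp add: prod.cl_ivl_Suc algebra_simps)
    qed
    finally show ?case .
  qed
  show ?thesis using main[of t] unfolding W_def f_def c_def C_def .
qed

end
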